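(* Let $(A^1,B^1)$ be an $n_1\times m_1$ bimatrix game, $(A^2,B^2)$ an $n_2\times m_2$ bimatrix game, $K$ a real number with $K>|c|$ for every entry $c$ of $A^1,B^1,A^2,B^2$, and let $(A,B)$ be the sum game $(A^1,B^1)+(A^2,B^2)$ via $K$. If $(x,y)$ is a Nash equilibrium of $(A,B)$, then $0<\sum_{i=1}^{n_1}x_i<1$ and $0<\sum_{j=1}^{m_1}y_j<1$.
   Context: An $n\times m$ bimatrix game $(A,B)$ consists of two real $n\times m$ matrices. A mixed strategy of the row player is a probability vector $x\in\Delta_n=\{x\in\mathbb{R}^n_{\ge 0}:\sum_i x_i=1\}$, of the column player $y\in\Delta_m$; the expected payoffs are $x^TAy$ (row player) and $x^TBy$ (column player). $(x,y)$ is a Nash equilibrium if $x^TAy\ge \hat x^TAy$ for all $\hat x\in\Delta_n$ and $x^TBy\ge x^TB\hat y$ for all $\hat y\in\Delta_m$. The sum game $(A^1,B^1)+(A^2,B^2)$ via $K$ is the $(n_1+n_2)\times(m_1+m_2)$ game $(A,B)$ with $A_{ij}=A^1_{ij}$, $B_{ij}=B^1_{ij}$ if $i\le n_1,j\le m_1$; $A_{ij}=A^2_{i-n_1,j-m_1}$, $B_{ij}=B^2_{i-n_1,j-m_1}$ if $i>n_1,j>m_1$; and $A_{ij}=K$, $B_{ij}=-K$ otherwise. *)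

theory Defs
  imports "HOL-Analysis.Analysis"
begin

text \<open>Matrices are functions nat => nat => real, indices 0-based: an n x m matrix
uses entries M i j with i < n, j < m.\<close>

definition mixed_strats :: "nat \<Rightarrow> (nat \<Rightarrow> real) set" where
  "mixed_strats n = {x. (\<forall>i<n. 0 \<le> x i) \<and> (\<Sum>i<n. x i) = 1}"

definition payoff :: "nat \<Rightarrow> nat \<Rightarrow> (nat \<Rightarrow> nat \<Rightarrow> real) \<Rightarrow> (nat \<Rightarrow> real) \<Rightarrow> (nat \<Rightarrow> real) \<Rightarrow> real" where
  "payoff n m M x y = (\<Sum>i<n. \<Sum>j<m. x i * M i j * y j)"

definition nash_eq :: "nat \<Rightarrow> nat \<Rightarrow> (nat \<Rightarrow> nat \<Rightarrow> real) \<Rightarrow> (nat \<Rightarrow> nat \<Rightarrow> real)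
    \<Rightarrow> (nat \<Rightarrow> real) \<Rightarrow> (nat \<Rightarrow> real) \<Rightarrow> bool" where
  "nash_eq n m A B x y \<longleftrightarrow> x \<in> mixed_strats n \<and> y \<in> mixed_strats m \<and>
     (\<forall>x'\<in>mixed_strats n. payoff n m A x y \<ge> payoff n m A x' y) \<and>
     (\<forall>y'\<in>mixed_strats m. payoff n m B x y \<ge> payoff n m B x y')"

definition sum_game :: "nat \<Rightarrow> nat \<Rightarrow> (nat \<Rightarrow> nat \<Rightarrow> real) \<Rightarrow> (nat \<Rightarrow> nat \<Rightarrow> real) \<Rightarrow> real
    \<Rightarrow> (nat \<Rightarrow> nat \<Rightarrow> real)" where
  "sum_game n1 m1 M1 M2 c = (\<lambda>i j.
     if i < n1 \<and> j < m1 then M1 i j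
     else if n1 \<le> i \<and> m1 \<le> j then M2 (i - n1) (j - m1)
     else c)"

end

theory Submission
  imports Defs
begin

lemma avg_lt:
  fixes z f :: "nat \<Rightarrow> real"
  assumes "finite S" "\<forall>k\<in>S. 0 \<le> z k" "sum z S = 1" "\<forall>k\<in>S. f k < a"
  shows "(\<Sum>k\<in>S. z k * f k) < a"
proof -
  obtain k where k: "k \<in> S" "z k > 0"
  proof (rule ccontr)
    assume "\<not> thesis"
    then have "\<forall>k\<in>S. z k = 0" using assms(2) that by force
    then have "sum z S = 0" by simp
    with assms(3) show False by simp
  qed
  have "(\<Sum>k\<in>S. z k * f k) < (\<Sum>k\<in>S. z k * a)"
    apply (rule sum_strict_mono_ex1[OF assms(1)])
     apply (simp add: assms(2,4) less_imp_le mult_left_mono)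
    using assms(4) k by (auto intro!: bexI[of _ k])
  also have "\<dots> = a" using assms(3) by (simp add: sum_distrib_right[symmetric])
  finally show ?thesis .
qed

lemma avg_gt:
  fixes z f :: "nat \<Rightarrow> real"
  assumes "finite S" "\<forall>k\<in>S. 0 \<le> z k" "sum z S = 1" "\<forall>k\<in>S. f k > a"
  shows "(\<Sum>k\<in>S. z k * f k) > a"
proof -
  have "(\<Sum>k\<in>S. z k * (- f k)) < - a" using avg_lt[OF assms(1-3), of "\<lambda>k. - f k" "-a"] assms(4) by auto
  then show ?thesis by (simp add: sum_negf)
qed

lemma avg_const:
  fixes z :: "nat \<Rightarrow> real"
  assumes "sum z S = 1"
  shows "(\<Sum>k\<in>S. z k * a) = a"
  using assms by (simp add: sum_distrib_right[symmetric])

lemma block: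
  fixes z v :: "nat \<Rightarrow> real"
  assumes "finite S1" "finite S2" "S1 \<inter> S2 = {}"
    "\<forall>k\<in>S1 \<union> S2. 0 \<le> z k" "sum z (S1 \<union> S2) = 1"
    "\<forall>k\<in>S1 \<union> S2. v k \<le> P" "P = (\<Sum>k\<in>S1 \<union> S2. z k * v k)"
    "a \<le> P" "\<forall>k\<in>S1. v k < a"
  shows "sum z S1 = 0"
proof (rule ccontr)
  assume ne: "sum z S1 \<noteq> 0"
  have ge: "sum z S1 \<ge> 0" using assms(4) by (auto intro: sum_nonneg)
  obtain k where k: "k \<in> S1" "z k > 0"
  proof (rule ccontr)
    assume "\<not> thesis"
    then have "\<forall>k\<in>S1. z k = 0" using assms(4) that by force
    then have "sum z S1 = 0" by simp
    with ne show False by simp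
  qed
  have s1: "(\<Sum>k\<in>S1. z k * v k) < (\<Sum>k\<in>S1. z k * a)"
    apply (rule sum_strict_mono_ex1[OF assms(1)])
     apply (simp add: assms(4,9) less_imp_le mult_left_mono)
    using assms(9) k by (auto intro!: bexI[of _ k])
  have s2: "(\<Sum>k\<in>S2. z k * v k) \<le> (\<Sum>k\<in>S2. z k * P)"
    apply (rule sum_mono)
    using assms(4,6) by (auto intro: mult_left_mono)
  have "P = (\<Sum>k\<in>S1. z k * v k) + (\<Sum>k\<in>S2. z k * v k)"
    using assms(7) sum.union_disjoint[OF assms(1-3), of "\<lambda>k. z k * v k"] by simp
  also have "\<dots> < a * sum z S1 + P * sum z S2"
  proof -
    have e1: "(\<Sum>k\<in>S1. z k * a) = a * sum z S1" unfolding sum_distrib_left by (simp add: mult.commute)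
    have e2: "(\<Sum>k\<in>S2. z k * P) = P * sum z S2" unfolding sum_distrib_left by (simp add: mult.commute)
    show ?thesis using s1 s2 unfolding e1 e2 by linarith
  qed
  also have "\<dots> \<le> P * sum z S1 + P * sum z S2"
    using assms(8) ge by (simp add: mult_right_mono)
  also have "\<dots> = P" using assms(5) sum.union_disjoint[OF assms(1-3), of z]
    by (simp add: distrib_left[symmetric])
  finally show False by simp
qed

lemma zero_block:
  fixes z :: "nat \<Rightarrow> real"
  assumes "finite S" "\<forall>k\<in>S. 0 \<le> z k" "sum z S = 0"
  shows "\<forall>k\<in>S. z k = 0"
  using assms sum_nonneg_eq_0_iff by blast

lemma union_red:
  fixes f :: "nat \<Rightarrow> real"
  assumes "finite S1" "finite S2" "S1 \<inter> S2 = {}" "\<forall>k\<in>S2. f k = 0"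
  shows "sum f (S1 \<union> S2) = sum f S1"
proof -
  have "sum f S2 = 0" using assms(4) by simp
  then show ?thesis using sum.union_disjoint[OF assms(1-3), of f] by simp
qed

lemma split_range: "{..<(a::nat)+b} = {..<a} \<union> {a..<a+b}" "{..<a} \<inter> {a..<a+b} = {}"
  by auto

theorem lemma5:
  fixes n1 m1 n2 m2 :: nat
    and A1 B1 A2 B2 :: "nat \<Rightarrow> nat \<Rightarrow> real"
    and K :: real
    and x y :: "nat \<Rightarrow> real"
  assumes "n1 \<ge> 1" "m1 \<ge> 1" "n2 \<ge> 1" "m2 \<ge> 1"
    and "\<forall>i<n1. \<forall>j<m1. \<bar>A1 i j\<bar> < K \<and> \<bar>B1 i j\<bar> < K"
    and "\<forall>i<n2. \<forall>j<m2. \<bar>A2 i j\<bar> < K \<and> \<bar>B2 i j\<bar> < K"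
    and "nash_eq (n1 + n2) (m1 + m2) (sum_game n1 m1 A1 A2 K) (sum_game n1 m1 B1 B2 (- K)) x y"
  shows "0 < (\<Sum>i<n1. x i) \<and> (\<Sum>i<n1. x i) < 1 \<and> 0 < (\<Sum>j<m1. y j) \<and> (\<Sum>j<m1. y j) < 1"
proof -
  define N where "N = n1 + n2"
  define M where "M = m1 + m2"
  define A where "A = sum_game n1 m1 A1 A2 K"
  define B where "B = sum_game n1 m1 B1 B2 (- K)"
  define r where "r = (\<lambda>i. \<Sum>j<M. A i j * y j)"
  define c where "c = (\<lambda>j. \<Sum>i<N. x i * B i j)"
  define PA where "PA = payoff N M A x y"
  define PB where "PB = payoff N M B x y"
  have nash: "nash_eq N M A B x y" using assms(7) by (simp add: N_def M_def A_def B_def)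
  have xm: "x \<in> mixed_strats N" and ym: "y \<in> mixed_strats M" using nash by (auto simp: nash_eq_def)
  have xnn: "\<forall>i<N. 0 \<le> x i" and xs: "(\<Sum>i<N. x i) = 1" using xm by (auto simp: mixed_strats_def)
  have ynn: "\<forall>j<M. 0 \<le> y j" and ys: "(\<Sum>j<M. y j) = 1" using ym by (auto simp: mixed_strats_def)
  have PAr: "PA = (\<Sum>i<N. x i * r i)"
    by (simp add: PA_def payoff_def r_def sum_distrib_left mult.assoc)
  have PBc: "PB = (\<Sum>j<M. y j * c j)"
    unfolding PB_def payoff_def c_def
    by (subst sum.swap) (simp add: sum_distrib_left sum_distrib_right mult.commute mult.left_commute)
  have rle: "\<forall>k<N. r k \<le> PA"
  proof (intro allI impI)
    fix k assume k: "k < N"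
    define e where "e = (\<lambda>i. if i = k then 1 else (0::real))"
    have "e \<in> mixed_strats N" using k by (simp add: mixed_strats_def e_def)
    then have "payoff N M A e y \<le> PA" using nash by (auto simp: nash_eq_def PA_def)
    moreover have "payoff N M A e y = r k"
    proof -
      have "payoff N M A e y = (\<Sum>i<N. if i = k then (\<Sum>j<M. A i j * y j) else 0)"
        unfolding payoff_def by (rule sum.cong) (auto simp: e_def)
      then show ?thesis using k by (simp add: r_def)
    qed
    ultimately show "r k \<le> PA" by simp
  qed
  have cle: "\<forall>k<M. c k \<le> PB"
  proof (intro allI impI)
    fix k assume k: "k < M"
    define e where "e = (\<lambda>i. if i = k then 1 else (0::real))"
    have "e \<in> mixed_strats M" using k by (simp add: mixed_strats_def e_def)
    then have "payoff N M B x e \<le> PB" using nash by (auto simp: nash_eq_def PB_def)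
    moreover have "payoff N M B x e = c k"
    proof -
      have "payoff N M B x e = (\<Sum>i<N. x i * B i k)"
        unfolding payoff_def e_def using k by (simp add: if_distrib cong: if_cong)
      then show ?thesis by (simp add: c_def)
    qed
    ultimately show "c k \<le> PB" by simp
  qed

  define I1 where "I1 = {..<n1}"
  define I2 where "I2 = {n1..<N}"
  define J1 where "J1 = {..<m1}"
  define J2 where "J2 = {m1..<M}"
  have IU: "{..<N} = I1 \<union> I2" "I1 \<inter> I2 = {}" "finite I1" "finite I2"
    unfolding I1_def I2_def N_def by auto
  have JU: "{..<M} = J1 \<union> J2" "J1 \<inter> J2 = {}" "finite J1" "finite J2"
    unfolding J1_def J2_def M_def by auto
  have xnn': "\<forall>k\<in>I1 \<union> I2. 0 \<le> x k" using xnn IU(1) by auto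
  have ynn': "\<forall>k\<in>J1 \<union> J2. 0 \<le> y k" using ynn JU(1) by auto
  have xs': "sum x (I1 \<union> I2) = 1" using xs IU(1) by simp
  have ys': "sum y (J1 \<union> J2) = 1" using ys JU(1) by simp
  have XX: "sum x I1 + sum x I2 = 1" using xs' sum.union_disjoint[OF IU(3,4,2), of x] by simp
  have YY: "sum y J1 + sum y J2 = 1" using ys' sum.union_disjoint[OF JU(3,4,2), of y] by simp
  have PA': "PA = (\<Sum>k\<in>I1 \<union> I2. x k * r k)" using PAr IU(1) by simp
  have PB': "PB = (\<Sum>k\<in>J1 \<union> J2. y k * c k)" using PBc JU(1) by simp
  have rle': "\<forall>k\<in>I1 \<union> I2. r k \<le> PA" using rle IU(1) by auto
  have cle': "\<forall>k\<in>J1 \<union> J2. c k \<le> PB" using cle JU(1) by auto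
  have rr: "r i = (\<Sum>j\<in>J1 \<union> J2. y j * A i j)" for i
    unfolding r_def JU(1) by (simp add: mult.commute)
  have cc: "c j = (\<Sum>i\<in>I1 \<union> I2. x i * B i j)" for j
    unfolding c_def IU(1) by simp
  have A11: "A i j = A1 i j" if "i \<in> I1" "j \<in> J1" for i j
    using that by (simp add: A_def sum_game_def I1_def J1_def)
  have A12: "A i j = K" if "i \<in> I1" "j \<in> J2" for i j
    using that by (simp add: A_def sum_game_def I1_def J2_def)
  have A21: "A i j = K" if "i \<in> I2" "j \<in> J1" for i j
    using that by (simp add: A_def sum_game_def I2_def J1_def)
  have A22: "A i j = A2 (i - n1) (j - m1)" if "i \<in> I2" "j \<in> J2" for i j
    using that by (simp add: A_def sum_game_def I2_def J2_def)
  have B11: "B i j = B1 i j" if "i \<in> I1" "j \<in> J1" for i j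
    using that by (simp add: B_def sum_game_def I1_def J1_def)
  have B12: "B i j = - K" if "i \<in> I1" "j \<in> J2" for i j
    using that by (simp add: B_def sum_game_def I1_def J2_def)
  have B21: "B i j = - K" if "i \<in> I2" "j \<in> J1" for i j
    using that by (simp add: B_def sum_game_def I2_def J1_def)
  have B22: "B i j = B2 (i - n1) (j - m1)" if "i \<in> I2" "j \<in> J2" for i j
    using that by (simp add: B_def sum_game_def I2_def J2_def)
  have bA1: "A1 i j < K" "B1 i j > - K" if "i \<in> I1" "j \<in> J1" for i j
  proof -
    have "\<bar>A1 i j\<bar> < K \<and> \<bar>B1 i j\<bar> < K" using assms(5) that unfolding I1_def J1_def by blast
    then show "A1 i j < K" "B1 i j > - K" by auto
  qed
  have bA2: "A2 (i - n1) (j - m1) < K" "B2 (i - n1) (j - m1) > - K" if "i \<in> I2" "j \<in> J2" for i j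
  proof -
    have "i - n1 < n2" "j - m1 < m2" using that unfolding I2_def J2_def N_def M_def by auto
    then have "\<bar>A2 (i - n1) (j - m1)\<bar> < K \<and> \<bar>B2 (i - n1) (j - m1)\<bar> < K" using assms(6) by blast
    then show "A2 (i - n1) (j - m1) < K" "B2 (i - n1) (j - m1) > - K" by auto
  qed
  have n1I2: "n1 \<in> I2" unfolding I2_def N_def using assms(3) by auto
  have m1J2: "m1 \<in> J2" unfolding J2_def M_def using assms(4) by auto
  have zI1: "0 \<in> I1" unfolding I1_def using assms(1) by auto
  have zJ1: "0 \<in> J1" unfolding J1_def using assms(2) by auto

  have I1y: "sum y J2 = 0" if "sum x I2 = 0"
  proof -
    have x0: "\<forall>i\<in>I2. x i = 0" using zero_block[OF IU(4) _ that] xnn' by auto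
    have X1: "sum x I1 = 1" using XX that by simp
    have cv: "c j = (\<Sum>i\<in>I1. x i * B i j)" for j
      unfolding cc by (rule union_red[OF IU(3,4,2)]) (simp add: x0)
    have low: "c j = - K" if "j \<in> J2" for j
      unfolding cv using B12[OF _ that] avg_const[OF X1, of "- K"] by simp
    have "c 0 = (\<Sum>i\<in>I1. x i * B1 i 0)" unfolding cv using B11[OF _ zJ1] by simp
    also have "\<dots> > - K" using avg_gt[OF IU(3) _ X1] bA1(2)[OF _ zJ1] xnn' by auto
    finally have lowv: "\<forall>j\<in>J2. c j < c 0" using low by auto
    show ?thesis
      apply (rule block[of J2 J1 y c PB "c 0"])
      using JU ynn' ys' cle' PB' lowv zJ1 by (auto simp: Un_commute Int_commute)
  qed
  have I2y: "sum y J1 = 0" if "sum x I1 = 0"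
  proof -
    have x0: "\<forall>i\<in>I1. x i = 0" using zero_block[OF IU(3) _ that] xnn' by auto
    have X2: "sum x I2 = 1" using XX that by simp
    have cv: "c j = (\<Sum>i\<in>I2. x i * B i j)" for j
      unfolding cc using union_red[OF IU(4,3) _, of "\<lambda>i. x i * B i j"] x0 IU(2)
      by (simp add: Un_commute Int_commute)
    have low: "c j = - K" if "j \<in> J1" for j
      unfolding cv using B21[OF _ that] avg_const[OF X2, of "- K"] by simp
    have "c m1 = (\<Sum>i\<in>I2. x i * B2 (i - n1) (m1 - m1))" unfolding cv using B22[OF _ m1J2] by simp
    also have "\<dots> > - K" using avg_gt[OF IU(4) _ X2] bA2(2)[OF _ m1J2] xnn' by auto
    finally have lowv: "\<forall>j\<in>J1. c j < c m1" using low by auto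
    show ?thesis
      apply (rule block[of J1 J2 y c PB "c m1"])
      using JU ynn' ys' cle' PB' lowv m1J2 by auto
  qed
  have I3x: "sum x I1 = 0" if "sum y J2 = 0"
  proof -
    have y0: "\<forall>j\<in>J2. y j = 0" using zero_block[OF JU(4) _ that] ynn' by auto
    have Y1: "sum y J1 = 1" using YY that by simp
    have rv: "r i = (\<Sum>j\<in>J1. y j * A i j)" for i
      unfolding rr by (rule union_red[OF JU(3,4,2)]) (simp add: y0)
    have hi: "r n1 = K" unfolding rv using A21[OF n1I2] avg_const[OF Y1, of K] by simp
    have lowv: "\<forall>i\<in>I1. r i < K"
    proof
      fix i assume i: "i \<in> I1"
      have "r i = (\<Sum>j\<in>J1. y j * A1 i j)" unfolding rv using A11[OF i] by simp
      also have "\<dots> < K" using avg_lt[OF JU(3) _ Y1] bA1(1)[OF i] ynn' by auto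
      finally show "r i < K" .
    qed
    show ?thesis
      apply (rule block[of I1 I2 x r PA K])
      using IU xnn' xs' rle' PA' lowv hi n1I2 by auto
  qed
  have I4x: "sum x I2 = 0" if "sum y J1 = 0"
  proof -
    have y0: "\<forall>j\<in>J1. y j = 0" using zero_block[OF JU(3) _ that] ynn' by auto
    have Y2: "sum y J2 = 1" using YY that by simp
    have rv: "r i = (\<Sum>j\<in>J2. y j * A i j)" for i
      unfolding rr using union_red[OF JU(4,3) _, of "\<lambda>j. y j * A i j"] y0 JU(2)
      by (simp add: Un_commute Int_commute)
    have hi: "r 0 = K" unfolding rv using A12[OF zI1] avg_const[OF Y2, of K] by simp
    have lowv: "\<forall>i\<in>I2. r i < K"
    proof
      fix i assume i: "i \<in> I2"
      have "r i = (\<Sum>j\<in>J2. y j * A2 (i - n1) (j - m1))" unfolding rv using A22[OF i] by simp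
      also have "\<dots> < K" using avg_lt[OF JU(4) _ Y2] bA2(1)[OF i] ynn' by auto
      finally show "r i < K" .
    qed
    show ?thesis
      apply (rule block[of I2 I1 x r PA K])
      using IU xnn' xs' rle' PA' lowv hi zI1 by (auto simp: Un_commute Int_commute)
  qed
  have gx: "sum x I1 \<ge> 0" "sum x I2 \<ge> 0" using xnn' by (auto intro: sum_nonneg)
  have gy: "sum y J1 \<ge> 0" "sum y J2 \<ge> 0" using ynn' by (auto intro: sum_nonneg)
  have a: "sum x I1 \<noteq> 0" using I2y I4x I1y XX by (metis add.right_neutral I3x zero_neq_one)
  have b: "sum x I2 \<noteq> 0" using I1y I3x XX by force
  have c: "sum y J1 \<noteq> 0" using I4x I1y YY by force
  have d: "sum y J2 \<noteq> 0" using I3x I2y YY by force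
  show ?thesis using a b c d gx gy XX YY unfolding I1_def J1_def by linarith
qed

end
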